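(* Let $\mathcal{G}=(\mathcal{N},\mathcal{E})$ be a finite, undirected, connected graph, let $\mathcal{M}_1,\dots,\mathcal{M}_m$ be a non-overlapping partition of $\mathcal{N}$ into nonempty sets, let $h\ge 1$ and let real numbers $a_{i,\ell}$ ($i\in\mathcal{N}$, $\ell=1,\dots,h$) be given. Run the coalition formation procedure described in the context for $m-1$ iterations. Then either every resulting coalition $\mathcal{C}_p^{(m-1)}$, $p=1,\dots,m$, is self-sufficient, or $\mathcal{C}_p^{(m-1)}=\mathcal{N}$ for all $p=1,\dots,m$.
   Context: For $S\subseteq\mathcal{N}$ and $\ell\in\{1,\dots,h\}$ define the local imbalance $\Delta_{S,\ell}=\sum_{i\in S}a_{i,\ell}$ (in the application, $a_{i,\ell}=-\bar u^{\mathrm g}_i+\hat d_{i,\ell}+\bar w_i^{\mathrm d}$: maximum dispatchable generation subtracted from worst-case net load). $S$ is self-sufficient if $\Delta_{S,\ell}\le 0$ for all $\ell=1,\dots,h$. Coalition formation procedure: initially $\mathcal{C}_p^{(0)}=\mathcal{M}_p$ for each $p$. At every iteration the coalitions form a partition of $\mathcal{N}$ into unions of the $\mathcal{M}_p$ (each $\mathcal{M}_p$ belongs to the coalition $\mathcal{C}_p^{(r)}$, and two indices $p,q$ either have identical or disjoint coalitions). At iteration $r$ ($0\le r<m-1$): if all coalitions are self-sufficient, nothing changes. Otherwise, each coalition $\mathcal{C}$ that is not self-sufficient and has an adjacent coalition (a distinct coalition containing a node adjacent in $\mathcal{G}$ to a node of $\mathcal{C}$) requests a merger; an adjacent coalition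 $\mathcal{C}'$ that is not already engaged with another coalition in this iteration responds with $J^{\mathrm{cim}}=\sum_{\ell=1}^h\max(0,\Delta_{\mathcal{C}',\ell}+\Delta_{\mathcal{C},\ell})$ (an engaged one responds $+\infty$), and $\mathcal{C}$ merges (takes the union) with a responding adjacent coalition minimizing $J^{\mathrm{cim}}$ among finite values, all members of both coalitions updating their coalition to the union. Each coalition participates in at most one merger per iteration, and in every iteration in which some coalition is not self-sufficient and has an adjacent coalition, at least one merger takes place. *)

theory Defs
  imports Complex_Main
begin

definition imbalance :: "('n \<Rightarrow> nat \<Rightarrow> real) \<Rightarrow> 'n set \<Rightarrow> nat \<Rightarrow> real" where
  "imbalance a S l = (\<Sum>i\<in>S. a i l)"

definition self_sufficient :: "('n \<Rightarrow> nat \<Rightarrow> real) \<Rightarrow> nat \<Rightarrow> 'n set \<Rightarrow> bool" where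
  "self_sufficient a h S \<longleftrightarrow> (\<forall>l\<in>{1..h}. imbalance a S l \<le> 0)"

definition adjacent_coal :: "('n \<Rightarrow> 'n \<Rightarrow> bool) \<Rightarrow> 'n set \<Rightarrow> 'n set \<Rightarrow> bool" where
  "adjacent_coal E S T \<longleftrightarrow> S \<noteq> T \<and> (\<exists>i\<in>S. \<exists>j\<in>T. E i j)"

definition J_cim :: "('n \<Rightarrow> nat \<Rightarrow> real) \<Rightarrow> nat \<Rightarrow> 'n set \<Rightarrow> 'n set \<Rightarrow> real" where
  "J_cim a h S T = (\<Sum>l=1..h. max 0 (imbalance a T l + imbalance a S l))"

definition engaged :: "('n set \<times> 'n set) list \<Rightarrow> 'n set set" where
  "engaged evs = fst ` set evs \<union> snd ` set evs"

text \<open>The mergers of the iteration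
  are recorded as a list evs of (requesting coalition, responding coalition) pairs, in the
  order in which they happen; a coalition is engaged once it occurs in an earlier merger.\<close>
definition iteration_step ::
  "('n \<Rightarrow> 'n \<Rightarrow> bool) \<Rightarrow> ('n \<Rightarrow> nat \<Rightarrow> real) \<Rightarrow> nat \<Rightarrow> nat
     \<Rightarrow> (nat \<Rightarrow> 'n set) \<Rightarrow> (nat \<Rightarrow> 'n set) \<Rightarrow> bool" where
  "iteration_step E a h m Cs Cs' \<longleftrightarrow>
     (let Coal = Cs ` {1..m} in
      if (\<forall>S\<in>Coal. self_sufficient a h S) then (\<forall>p\<in>{1..m}. Cs' p = Cs p)
      else (\<exists>evs :: ('n set \<times> 'n set) list.
        (\<forall>k<length evs. let S = fst (evs ! k); T = snd (evs ! k) in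
            S \<in> Coal \<and> T \<in> Coal \<and> \<not> self_sufficient a h S \<and> adjacent_coal E S T \<and>
            S \<notin> engaged (take k evs) \<and> T \<notin> engaged (take k evs) \<and>
            (\<forall>T'\<in>Coal. adjacent_coal E S T' \<and> T' \<notin> engaged (take k evs)
                 \<longrightarrow> J_cim a h S T \<le> J_cim a h S T')) \<and>
        ((\<exists>S\<in>Coal. \<not> self_sufficient a h S \<and> (\<exists>T\<in>Coal. adjacent_coal E S T)) \<longrightarrow> evs \<noteq> []) \<and>
        (\<forall>ST\<in>set evs. \<forall>p\<in>{1..m}. Cs p = fst ST \<or> Cs p = snd ST \<longrightarrow> Cs' p = fst ST \<union> snd ST) \<and>
        (\<forall>p\<in>{1..m}. Cs p \<notin> engaged evs \<longrightarrow> Cs' p = Cs p)))"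

end

theory Submission
  imports Defs
begin

definition inv_c :: "'n set \<Rightarrow> nat \<Rightarrow> (nat \<Rightarrow> 'n set) \<Rightarrow> bool" where
  "inv_c N m Cs \<longleftrightarrow> (\<forall>p\<in>{1..m}. Cs p \<noteq> {} \<and> Cs p \<subseteq> N) \<and> (\<Union>p\<in>{1..m}. Cs p) = N"

definition good_c :: "('n \<Rightarrow> nat \<Rightarrow> real) \<Rightarrow> nat \<Rightarrow> 'n set \<Rightarrow> nat \<Rightarrow> (nat \<Rightarrow> 'n set) \<Rightarrow> bool" where
  "good_c a h N m Cs \<longleftrightarrow> (\<forall>p\<in>{1..m}. self_sufficient a h (Cs p)) \<or> (\<forall>p\<in>{1..m}. Cs p = N)"

lemma crossing:
  assumes "E\<^sup>*\<^sup>* i j" "i \<in> X"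
  shows "j \<notin> X \<longrightarrow> (\<exists>x y. x \<in> X \<and> y \<notin> X \<and> E x y)"
  using assms(1)
proof (induction rule: rtranclp_induct)
  case base then show ?case using assms(2) by simp
next
  case (step y z)
  show ?case
  proof (cases "y \<in> X")
    case True then show ?thesis using step.hyps(2) by blast
  next
    case False then show ?thesis using step.IH by blast
  qed
qed

lemma step_unfold:
  fixes Cs Cs' :: "nat \<Rightarrow> 'n set"
  assumes "iteration_step E a h m Cs Cs'" "\<not> (\<forall>S\<in>Cs ` {1..m}. self_sufficient a h S)"
  shows "\<exists>evs :: ('n set \<times> 'n set) list.
        (\<forall>k<length evs. fst (evs ! k) \<in> Cs ` {1..m} \<and> snd (evs ! k) \<in> Cs ` {1..m} \<and>
            adjacent_coal E (fst (evs ! k)) (snd (evs ! k))) \<and>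
        ((\<exists>S\<in>Cs ` {1..m}. \<not> self_sufficient a h S \<and> (\<exists>T\<in>Cs ` {1..m}. adjacent_coal E S T)) \<longrightarrow> evs \<noteq> []) \<and>
        (\<forall>ST\<in>set evs. \<forall>p\<in>{1..m}. Cs p = fst ST \<or> Cs p = snd ST \<longrightarrow> Cs' p = fst ST \<union> snd ST) \<and>
        (\<forall>p\<in>{1..m}. Cs p \<notin> engaged evs \<longrightarrow> Cs' p = Cs p)"
proof -
  have H: "\<exists>evs :: ('n set \<times> 'n set) list.
        (\<forall>k<length evs.
            fst (evs ! k) \<in> Cs ` {1..m} \<and> snd (evs ! k) \<in> Cs ` {1..m} \<and> \<not> self_sufficient a h (fst (evs ! k)) \<and> adjacent_coal E (fst (evs ! k)) (snd (evs ! k)) \<and>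
            fst (evs ! k) \<notin> engaged (take k evs) \<and> snd (evs ! k) \<notin> engaged (take k evs) \<and>
            (\<forall>T'\<in>Cs ` {1..m}. adjacent_coal E (fst (evs ! k)) T' \<and> T' \<notin> engaged (take k evs)
                 \<longrightarrow> J_cim a h (fst (evs ! k)) (snd (evs ! k)) \<le> J_cim a h (fst (evs ! k)) T')) \<and>
        ((\<exists>S\<in>Cs ` {1..m}. \<not> self_sufficient a h S \<and> (\<exists>T\<in>Cs ` {1..m}. adjacent_coal E S T)) \<longrightarrow> evs \<noteq> []) \<and>
        (\<forall>ST\<in>set evs. \<forall>p\<in>{1..m}. Cs p = fst ST \<or> Cs p = snd ST \<longrightarrow> Cs' p = fst ST \<union> snd ST) \<and>
        (\<forall>p\<in>{1..m}. Cs p \<notin> engaged evs \<longrightarrow> Cs' p = Cs p)"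
    using assms(1) unfolding iteration_step_def Let_def if_not_P[OF assms(2)] .
  then obtain evs :: "('n set \<times> 'n set) list" where Q: "(\<forall>k<length evs.
            fst (evs ! k) \<in> Cs ` {1..m} \<and> snd (evs ! k) \<in> Cs ` {1..m} \<and> \<not> self_sufficient a h (fst (evs ! k)) \<and> adjacent_coal E (fst (evs ! k)) (snd (evs ! k)) \<and>
            fst (evs ! k) \<notin> engaged (take k evs) \<and> snd (evs ! k) \<notin> engaged (take k evs) \<and>
            (\<forall>T'\<in>Cs ` {1..m}. adjacent_coal E (fst (evs ! k)) T' \<and> T' \<notin> engaged (take k evs)
                 \<longrightarrow> J_cim a h (fst (evs ! k)) (snd (evs ! k)) \<le> J_cim a h (fst (evs ! k)) T')) \<and>
        ((\<exists>S\<in>Cs ` {1..m}. \<not> self_sufficient a h S \<and> (\<exists>T\<in>Cs ` {1..m}. adjacent_coal E S T)) \<longrightarrow> evs \<noteq> []) \<and>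
        (\<forall>ST\<in>set evs. \<forall>p\<in>{1..m}. Cs p = fst ST \<or> Cs p = snd ST \<longrightarrow> Cs' p = fst ST \<union> snd ST) \<and>
        (\<forall>p\<in>{1..m}. Cs p \<notin> engaged evs \<longrightarrow> Cs' p = Cs p)" by (rule exE)
  have A: "\<forall>k<length evs. fst (evs ! k) \<in> Cs ` {1..m} \<and> snd (evs ! k) \<in> Cs ` {1..m} \<and>
            adjacent_coal E (fst (evs ! k)) (snd (evs ! k))"
  proof (intro allI impI)
    fix k assume "k < length evs"
    then show "fst (evs ! k) \<in> Cs ` {1..m} \<and> snd (evs ! k) \<in> Cs ` {1..m} \<and>
            adjacent_coal E (fst (evs ! k)) (snd (evs ! k))"
      using Q[THEN conjunct1, rule_format, of k] by (simp only: simp_thms)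
  qed
  show ?thesis
    apply (rule exI[of _ evs])
    apply (rule conjI[OF A])
    apply (rule Q[THEN conjunct2])
    done
qed

lemma step_unfold_E:
  fixes Cs Cs' :: "nat \<Rightarrow> 'n set"
  assumes "iteration_step E a h m Cs Cs'" "\<not> (\<forall>S\<in>Cs ` {1..m}. self_sufficient a h S)"
  obtains evs where "\<forall>k<length evs. fst (evs ! k) \<in> Cs ` {1..m} \<and> snd (evs ! k) \<in> Cs ` {1..m} \<and>
            adjacent_coal E (fst (evs ! k)) (snd (evs ! k))"
    and "((\<exists>S\<in>Cs ` {1..m}. \<not> self_sufficient a h S \<and> (\<exists>T\<in>Cs ` {1..m}. adjacent_coal E S T)) \<longrightarrow> evs \<noteq> [])"
    and "(\<forall>ST\<in>set evs. \<forall>p\<in>{1..m}. Cs p = fst ST \<or> Cs p = snd ST \<longrightarrow> Cs' p = fst ST \<union> snd ST)"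
    and "(\<forall>p\<in>{1..m}. Cs p \<notin> engaged evs \<longrightarrow> Cs' p = Cs p)"
  using step_unfold[OF assms] by (elim exE conjE) (rule that)

lemma step_same:
  assumes "iteration_step E a h m Cs Cs'" "\<forall>S\<in>Cs ` {1..m}. self_sufficient a h S"
  shows "\<forall>p\<in>{1..m}. Cs' p = Cs p"
  using assms(1) unfolding iteration_step_def Let_def if_P[OF assms(2)] .

lemma step_mono:
  assumes inv: "inv_c N m Cs" and st: "iteration_step E a h m Cs Cs'"
  shows "\<forall>p\<in>{1..m}. Cs p \<subseteq> Cs' p \<and> Cs' p \<subseteq> N"
proof (cases "\<forall>S\<in>Cs ` {1..m}. self_sufficient a h S")
  case True then show ?thesis using step_same[OF st] inv unfolding inv_c_def by auto
next
  case False
  obtain evs where A: "\<forall>k<length evs. fst (evs ! k) \<in> Cs ` {1..m} \<and> snd (evs ! k) \<in> Cs ` {1..m} \<and>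
            adjacent_coal E (fst (evs ! k)) (snd (evs ! k))"
    and B: "((\<exists>S\<in>Cs ` {1..m}. \<not> self_sufficient a h S \<and> (\<exists>T\<in>Cs ` {1..m}. adjacent_coal E S T)) \<longrightarrow> evs \<noteq> [])"
    and C: "(\<forall>ST\<in>set evs. \<forall>p\<in>{1..m}. Cs p = fst ST \<or> Cs p = snd ST \<longrightarrow> Cs' p = fst ST \<union> snd ST)"
    and D: "(\<forall>p\<in>{1..m}. Cs p \<notin> engaged evs \<longrightarrow> Cs' p = Cs p)"
    by (rule step_unfold_E[OF st False])
  show ?thesis
  proof
    fix p assume p: "p \<in> {1..m}"
    show "Cs p \<subseteq> Cs' p \<and> Cs' p \<subseteq> N"
    proof (cases "Cs p \<in> engaged evs")
      case True
      then obtain ST where ST: "ST \<in> set evs" "Cs p = fst ST \<or> Cs p = snd ST"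
        unfolding engaged_def by auto
      then obtain k where k: "k < length evs" "ST = evs ! k" by (auto simp: in_set_conv_nth)
      have "fst ST \<in> Cs ` {1..m}" "snd ST \<in> Cs ` {1..m}" using A k by auto
      then have "fst ST \<subseteq> N" "snd ST \<subseteq> N" using inv unfolding inv_c_def by auto
      moreover have "Cs' p = fst ST \<union> snd ST" using C ST p by blast
      ultimately show ?thesis using ST by auto
    next
      case False then show ?thesis using D p inv unfolding inv_c_def by auto
    qed
  qed
qed

lemma step_inv:
  assumes inv: "inv_c N m Cs" and st: "iteration_step E a h m Cs Cs'"
  shows "inv_c N m Cs'"
proof -
  have m: "\<forall>p\<in>{1..m}. Cs p \<subseteq> Cs' p \<and> Cs' p \<subseteq> N" by (rule step_mono[OF inv st])
  have "(\<Union>p\<in>{1..m}. Cs' p) \<subseteq> N" using m by blast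
  moreover have "N \<subseteq> (\<Union>p\<in>{1..m}. Cs' p)" using m inv unfolding inv_c_def by blast
  ultimately show ?thesis using m inv unfolding inv_c_def by blast
qed

lemma step_good:
  assumes inv: "inv_c N m Cs" and st: "iteration_step E a h m Cs Cs'" and g: "good_c a h N m Cs"
  shows "good_c a h N m Cs'"
proof (cases "\<forall>S\<in>Cs ` {1..m}. self_sufficient a h S")
  case True then show ?thesis using step_same[OF st] g unfolding good_c_def by auto
next
  case False
  then have allN: "\<forall>p\<in>{1..m}. Cs p = N" using g unfolding good_c_def by auto
  obtain evs where A: "\<forall>k<length evs. fst (evs ! k) \<in> Cs ` {1..m} \<and> snd (evs ! k) \<in> Cs ` {1..m} \<and>
            adjacent_coal E (fst (evs ! k)) (snd (evs ! k))"
    and B: "((\<exists>S\<in>Cs ` {1..m}. \<not> self_sufficient a h S \<and> (\<exists>T\<in>Cs ` {1..m}. adjacent_coal E S T)) \<longrightarrow> evs \<noteq> [])"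
    and C: "(\<forall>ST\<in>set evs. \<forall>p\<in>{1..m}. Cs p = fst ST \<or> Cs p = snd ST \<longrightarrow> Cs' p = fst ST \<union> snd ST)"
    and D: "(\<forall>p\<in>{1..m}. Cs p \<notin> engaged evs \<longrightarrow> Cs' p = Cs p)"
    by (rule step_unfold_E[OF st False])
  have "evs = []"
  proof (rule ccontr)
    assume "evs \<noteq> []"
    then have "fst (evs ! 0) \<in> Cs ` {1..m}" "snd (evs ! 0) \<in> Cs ` {1..m}"
      "adjacent_coal E (fst (evs ! 0)) (snd (evs ! 0))" using A by auto
    then show False using allN unfolding adjacent_coal_def by auto
  qed
  then have "\<forall>p\<in>{1..m}. Cs' p = Cs p" using D unfolding engaged_def by auto
  then show ?thesis using allN unfolding good_c_def by auto
qed

lemma adj_exists: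
  assumes inv: "inv_c N m Cs"
    and E_in: "\<And>i j. E i j \<Longrightarrow> i \<in> N \<and> j \<in> N"
    and E_sym: "\<And>i j. E i j \<Longrightarrow> E j i"
    and connected: "\<forall>i\<in>N. \<forall>j\<in>N. E\<^sup>*\<^sup>* i j"
    and p0: "p0 \<in> {1..m}" and q0: "q0 \<in> {1..m}" and ne: "Cs q0 \<noteq> N"
  shows "\<exists>T\<in>Cs ` {1..m}. adjacent_coal E (Cs p0) T"
proof (cases "Cs p0 = N")
  case False
  have "Cs p0 \<noteq> {}" "Cs p0 \<subseteq> N" using inv p0 unfolding inv_c_def by auto
  then obtain i j where ij: "i \<in> Cs p0" "j \<in> N" "j \<notin> Cs p0" using False by blast
  then have "E\<^sup>*\<^sup>* i j" using connected \<open>Cs p0 \<subseteq> N\<close> by blast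
  from crossing[OF this ij(1)] ij(3) obtain x y where xy: "x \<in> Cs p0" "y \<notin> Cs p0" "E x y" by blast
  then have "y \<in> N" using E_in by blast
  then obtain q where q: "q \<in> {1..m}" "y \<in> Cs q" using inv unfolding inv_c_def by blast
  then have "adjacent_coal E (Cs p0) (Cs q)" using xy unfolding adjacent_coal_def by blast
  then show ?thesis using q by blast
next
  case True
  have "Cs q0 \<noteq> {}" "Cs q0 \<subseteq> N" using inv q0 unfolding inv_c_def by auto
  then obtain i j where ij: "i \<in> Cs q0" "j \<in> N" "j \<notin> Cs q0" using ne by blast
  then have "E\<^sup>*\<^sup>* i j" using connected \<open>Cs q0 \<subseteq> N\<close> by blast
  from crossing[OF this ij(1)] ij(3) obtain x y where xy: "x \<in> Cs q0" "y \<notin> Cs q0" "E x y" by blast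
  then have "y \<in> N" using E_in by blast
  then have "adjacent_coal E (Cs p0) (Cs q0)" using xy True E_sym unfolding adjacent_coal_def by blast
  then show ?thesis using q0 by blast
qed

lemma step_card:
  assumes inv: "inv_c N m Cs" and st: "iteration_step E a h m Cs Cs'" and g: "\<not> good_c a h N m Cs"
    and E_in: "\<And>i j. E i j \<Longrightarrow> i \<in> N \<and> j \<in> N"
    and E_sym: "\<And>i j. E i j \<Longrightarrow> E j i"
    and connected: "\<forall>i\<in>N. \<forall>j\<in>N. E\<^sup>*\<^sup>* i j"
  shows "card (Cs' ` {1..m}) < card (Cs ` {1..m})"
proof -
  obtain p0 q0 where p0: "p0 \<in> {1..m}" "\<not> self_sufficient a h (Cs p0)"
    and q0: "q0 \<in> {1..m}" "Cs q0 \<noteq> N" using g unfolding good_c_def by blast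
  have F: "\<not> (\<forall>S\<in>Cs ` {1..m}. self_sufficient a h S)" using p0 by blast
  obtain evs where A: "\<forall>k<length evs. fst (evs ! k) \<in> Cs ` {1..m} \<and> snd (evs ! k) \<in> Cs ` {1..m} \<and>
            adjacent_coal E (fst (evs ! k)) (snd (evs ! k))"
    and B: "((\<exists>S\<in>Cs ` {1..m}. \<not> self_sufficient a h S \<and> (\<exists>T\<in>Cs ` {1..m}. adjacent_coal E S T)) \<longrightarrow> evs \<noteq> [])"
    and C: "(\<forall>ST\<in>set evs. \<forall>p\<in>{1..m}. Cs p = fst ST \<or> Cs p = snd ST \<longrightarrow> Cs' p = fst ST \<union> snd ST)"
    and D: "(\<forall>p\<in>{1..m}. Cs p \<notin> engaged evs \<longrightarrow> Cs' p = Cs p)"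
    by (rule step_unfold_E[OF st F])
  from adj_exists[OF inv E_in E_sym connected p0(1) q0] have "evs \<noteq> []"
    using B p0 by blast
  define S where "S = fst (evs ! 0)"
  define T where "T = snd (evs ! 0)"
  have ST: "S \<in> Cs ` {1..m}" "T \<in> Cs ` {1..m}" "S \<noteq> T" "(S, T) \<in> set evs"
    using A \<open>evs \<noteq> []\<close> unfolding S_def T_def adjacent_coal_def by auto
  have same: "Cs' p = Cs' q" if "p \<in> {1..m}" "q \<in> {1..m}" "Cs p = Cs q" for p q
  proof (cases "Cs p \<in> engaged evs")
    case True
    then obtain X where X: "X \<in> set evs" "Cs p = fst X \<or> Cs p = snd X"
      unfolding engaged_def by auto
    then show ?thesis using C that by metis
  next
    case False then show ?thesis using D that by metis
  qed
  define g where "g X = Cs' (SOME p. p \<in> {1..m} \<and> Cs p = X)" for X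
  have gp: "Cs' p = g (Cs p)" if "p \<in> {1..m}" for p
  proof -
    have "\<exists>q. q \<in> {1..m} \<and> Cs q = Cs p" using that by blast
    then have "(SOME q. q \<in> {1..m} \<and> Cs q = Cs p) \<in> {1..m} \<and> Cs (SOME q. q \<in> {1..m} \<and> Cs q = Cs p) = Cs p"
      by (rule someI_ex)
    then show ?thesis unfolding g_def using same that by metis
  qed
  have img: "Cs' ` {1..m} = g ` (Cs ` {1..m})" using gp by (auto simp: image_iff)
  obtain pS where pS: "pS \<in> {1..m}" "Cs pS = S" using ST by blast
  obtain pT where pT: "pT \<in> {1..m}" "Cs pT = T" using ST by blast
  have "g S = S \<union> T" using gp[OF pS(1)] C ST(4) pS by fastforce
  moreover have "g T = S \<union> T" using gp[OF pT(1)] C ST(4) pT by fastforce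
  ultimately have "\<not> inj_on g (Cs ` {1..m})" using ST unfolding inj_on_def by metis
  moreover have fin: "finite (Cs ` {1..m})" by simp
  ultimately have "card (g ` (Cs ` {1..m})) \<noteq> card (Cs ` {1..m})" using inj_on_iff_eq_card by blast
  moreover have "card (g ` (Cs ` {1..m})) \<le> card (Cs ` {1..m})" using card_image_le[OF fin] by blast
  ultimately show ?thesis using img by simp
qed

theorem proposition2:
  fixes N :: "'n set" and E :: "'n \<Rightarrow> 'n \<Rightarrow> bool"
    and m h :: nat and M :: "nat \<Rightarrow> 'n set"
    and a :: "'n \<Rightarrow> nat \<Rightarrow> real" and C :: "nat \<Rightarrow> nat \<Rightarrow> 'n set"
  assumes finN: "finite N"
    and E_in: "\<And>i j. E i j \<Longrightarrow> i \<in> N \<and> j \<in> N"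
    and E_sym: "\<And>i j. E i j \<Longrightarrow> E j i"
    and connected: "\<forall>i\<in>N. \<forall>j\<in>N. E\<^sup>*\<^sup>* i j"
    and M_nonempty: "\<forall>p\<in>{1..m}. M p \<noteq> {}"
    and M_disjoint: "\<forall>p\<in>{1..m}. \<forall>q\<in>{1..m}. p \<noteq> q \<longrightarrow> M p \<inter> M q = {}"
    and M_cover: "(\<Union>p\<in>{1..m}. M p) = N"
    and h_pos: "h \<ge> 1"
    and C_init: "\<forall>p\<in>{1..m}. C 0 p = M p"
    and C_step: "\<forall>r<m - 1. iteration_step E a h m (C r) (C (Suc r))"
  shows "(\<forall>p\<in>{1..m}. self_sufficient a h (C (m - 1) p)) \<or> (\<forall>p\<in>{1..m}. C (m - 1) p = N)"
proof -
  have main: "r \<le> m - 1 \<Longrightarrow> inv_c N m (C r) \<and> (good_c a h N m (C r) \<or> card (C r ` {1..m}) + r \<le> m)" for r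
  proof (induction r)
    case 0
    have "inv_c N m (C 0)" using C_init M_nonempty M_cover unfolding inv_c_def by auto
    moreover have "card (C 0 ` {1..m}) \<le> m" using card_image_le[of "{1..m}" "C 0"] by simp
    ultimately show ?case by simp
  next
    case (Suc r)
    then have r: "r < m - 1" by simp
    have st: "iteration_step E a h m (C r) (C (Suc r))" using C_step r by blast
    from Suc.IH r have IH: "inv_c N m (C r)" "good_c a h N m (C r) \<or> card (C r ` {1..m}) + r \<le> m" by auto
    have i: "inv_c N m (C (Suc r))" by (rule step_inv[OF IH(1) st])
    show ?case
    proof (cases "good_c a h N m (C r)")
      case True then show ?thesis using step_good[OF IH(1) st] i by blast
    next
      case False
      then have "card (C (Suc r) ` {1..m}) < card (C r ` {1..m})"
        using step_card[OF IH(1) st False E_in E_sym connected] by blast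
      then show ?thesis using IH(2) False i by simp
    qed
  qed
  from main[of "m - 1"] have I: "inv_c N m (C (m - 1))"
    and G: "good_c a h N m (C (m - 1)) \<or> card (C (m - 1) ` {1..m}) + (m - 1) \<le> m" by auto
  show ?thesis
  proof (cases "good_c a h N m (C (m - 1))")
    case True then show ?thesis unfolding good_c_def by blast
  next
    case False
    then have m1: "m \<ge> 1" unfolding good_c_def by auto
    have "card (C (m - 1) ` {1..m}) \<le> 1" using G False m1 by simp
    moreover have "C (m - 1) ` {1..m} \<noteq> {}" using m1 by auto
    ultimately obtain X where X: "C (m - 1) ` {1..m} = {X}"
      by (metis card_0_eq card_1_singletonE finite_imageI finite_atLeastAtMost le_less_Suc_eq less_one nat_less_le)
    then have "\<forall>p\<in>{1..m}. C (m - 1) p = X" by auto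
    moreover have "X = N" using I X unfolding inv_c_def by auto
    ultimately show ?thesis by blast
  qed
qed

end
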